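(* Let $(X_1,M_1),\dots,(X_n,M_n)$ be i.i.d. copies of $(X,M)\sim\mathbb{P}_{X,M}$, $X\in\mathbb{R}^d$, $M\in\{0,1\}^d$, and let $\{P_\theta:\theta\in\Theta\}$ be any model on $\mathbb{R}^d$. For $x\in\mathbb{R}^d$, $m\in\{0,1\}^d$ define $$\ell(x,m;\theta)=\big\langle\Phi(P_\theta^{(m)}),\Phi(P_\theta^{(m)})\big\rangle_{\mathcal{H}}-2\big\langle\Phi(P_\theta^{(m)}),\Phi(x^{(m)})\big\rangle_{\mathcal{H}}$$ for $m\neq(1,\dots,1)$ and $\ell(x,(1,\dots,1);\theta)=0$, and set $\widehat L_n(\theta)=\frac1n\sum_{i=1}^n\ell(X_i,M_i;\theta)$ and $L(\theta)=\mathbb{E}_{(X,M)}[\ell(X,M;\theta)]$. Then $$\sup_{\theta\in\Theta}\big|\widehat L_n(\theta)-L(\theta)\big|\to0\quad\mathbb{P}_{X,M}\text{-almost surely as }n\to\infty.$$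
   Context: $M_j=0$ means $X_j$ observed, $M_j=1$ missing. For $m\in\{0,1\}^d$, $x^{(m)}$ is the subvector of observed coordinates $\{j:m_j=0\}$ and $Q^{(m)}$ the law of $Y^{(m)}$, $Y\sim Q$. $k$ is a positive definite kernel bounded by $1$, dimension-independent (same formula in every dimension, e.g. Gaussian kernel), with RKHS $\mathcal{H}$; $\Phi(Q)=\mathbb{E}_{Y\sim Q}[k(Y,\cdot)]$ is the mean embedding and $\Phi(x)=k(x,\cdot)$. *)

theory Defs
  imports "HOL-Probability.Probability"
begin

text \<open>Vectors in R^d are \<open>real ^ 'd::{finite,linorder}\<close> for a finite, linearly ordered index type \<open>'d::{finite,linorder}\<close>;
  missingness patterns are \<open>m :: 'd::{finite,linorder} \<Rightarrow> bool\<close> with \<open>m j = True\<close> meaning coordinate j is missing.\<close>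

text \<open>Observed subvector \<open>x^(m)\<close>: the observed coordinates, in increasing index order,
  as a list (so its dimension varies with m).\<close>
definition obs_sub :: "('d::{finite,linorder} \<Rightarrow> bool) \<Rightarrow> real ^ 'd::{finite,linorder} \<Rightarrow> real list" where
  "obs_sub m x = map (\<lambda>j. x $ j) (sorted_list_of_set {j. \<not> m j})"

text \<open>A dimension-independent kernel is one function on real lists (vectors of any length).
  Positive definiteness (in every dimension) and symmetry.\<close>
definition pd_kernel :: "(real list \<Rightarrow> real list \<Rightarrow> real) \<Rightarrow> bool" where
  "pd_kernel k \<longleftrightarrow> (\<forall>u v. k u v = k v u) \<and>
     (\<forall>(l::nat) (n::nat) (xs::nat \<Rightarrow> real list) (c::nat \<Rightarrow> real).
        (\<forall>i<n. length (xs i) = l) \<longrightarrow> 0 \<le> (\<Sum>i<n. \<Sum>j<n. c i * c j * k (xs i) (xs j)))"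

text \<open>\<open><\<Phi>(Q^(m)), \<Phi>(Q^(m))>_H\<close> written out via the reproducing property as the double
  kernel integral over \<open>Q^(m)\<close> (image of Q under \<open>y \<mapsto> y^(m)\<close>).\<close>
definition emb_inner_self :: "(real list \<Rightarrow> real list \<Rightarrow> real) \<Rightarrow> (real ^ 'd::{finite,linorder}) measure
    \<Rightarrow> ('d::{finite,linorder} \<Rightarrow> bool) \<Rightarrow> real" where
  "emb_inner_self k Q m = (\<integral>y. (\<integral>y'. k (obs_sub m y) (obs_sub m y') \<partial>Q) \<partial>Q)"

text \<open>\<open><\<Phi>(Q^(m)), \<Phi>(x^(m))>_H = \<integral> k(y^(m), x^(m)) dQ(y)\<close>.\<close>
definition emb_inner_pt :: "(real list \<Rightarrow> real list \<Rightarrow> real) \<Rightarrow> (real ^ 'd::{finite,linorder}) measure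
    \<Rightarrow> ('d::{finite,linorder} \<Rightarrow> bool) \<Rightarrow> real ^ 'd::{finite,linorder} \<Rightarrow> real" where
  "emb_inner_pt k Q m x = (\<integral>y. k (obs_sub m y) (obs_sub m x) \<partial>Q)"

definition mmd_loss :: "(real list \<Rightarrow> real list \<Rightarrow> real) \<Rightarrow> (real ^ 'd::{finite,linorder}) measure
    \<Rightarrow> real ^ 'd::{finite,linorder} \<Rightarrow> ('d::{finite,linorder} \<Rightarrow> bool) \<Rightarrow> real" where
  "mmd_loss k Q x m =
     (if m = (\<lambda>_. True) then 0 else emb_inner_self k Q m - 2 * emb_inner_pt k Q m x)"

end

theory Submission
  imports Defs "HOL-Library.Discrete_Functions"
begin

definition qf :: "('s \<Rightarrow> 's \<Rightarrow> real) \<Rightarrow> nat \<Rightarrow> (nat \<Rightarrow> 's) \<Rightarrow> (nat \<Rightarrow> real) \<Rightarrow> real" where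
  "qf K n a c = (\<Sum>i<n. \<Sum>j<n. c i * c j * K (a i) (a j))"

lemma sum_lessThan_add: "(\<Sum>i<(p::nat)+N. f i) = (\<Sum>i<p. f i) + (\<Sum>l<N. f (p+l))"
  by (induction N) (auto simp: add.assoc)

definition jn :: "nat \<Rightarrow> (nat \<Rightarrow> 'a) \<Rightarrow> (nat \<Rightarrow> 'a) \<Rightarrow> nat \<Rightarrow> 'a" where
  "jn p a b i = (if i < p then a i else b (i - p))"

lemma qf_join:
  assumes sym: "\<And>x y. K x y = K y x"
  shows "qf K (p+N) (jn p a b) (jn p c d) =
     qf K p a c + 2 * (\<Sum>i<p. \<Sum>l<N. c i * d l * K (a i) (b l)) + qf K N b d"
proof -
  have "qf K (p+N) (jn p a b) (jn p c d) =
    (\<Sum>i<p. \<Sum>j<p. c i * c j * K (a i) (a j)) + (\<Sum>i<p. \<Sum>l<N. c i * d l * K (a i) (b l))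
    + ((\<Sum>l<N. \<Sum>i<p. d l * c i * K (b l) (a i)) + (\<Sum>l<N. \<Sum>l'<N. d l * d l' * K (b l) (b l')))"
    unfolding qf_def sum_lessThan_add by (simp add: jn_def sum.distrib)
  also have "(\<Sum>l<N. \<Sum>i<p. d l * c i * K (b l) (a i)) = (\<Sum>i<p. \<Sum>l<N. c i * d l * K (a i) (b l))"
    by (subst sum.swap) (simp add: sym mult.commute mult.left_commute)
  finally show ?thesis unfolding qf_def by simp
qed

locale ksetup = prob_space \<Omega> for \<Omega> :: "'w measure" +
  fixes Z :: "nat \<Rightarrow> 'w \<Rightarrow> 's" and S :: "'s measure" and \<mu> :: "'s measure"
    and K :: "'s \<Rightarrow> 's \<Rightarrow> real"
  assumes mu: "prob_space \<mu>" and sets_mu: "sets \<mu> = sets S" and space_S: "space S = UNIV"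
    and indep: "indep_vars (\<lambda>_. S) Z UNIV"
    and ident: "\<And>i. distr \<Omega> S (Z i) = \<mu>"
    and K_meas: "(\<lambda>(a,b). K a b) \<in> borel_measurable (S \<Otimes>\<^sub>M S)"
    and K_bd: "\<And>a b. \<bar>K a b\<bar> \<le> 1"
    and K_sym: "\<And>a b. K a b = K b a"
    and K_pd: "\<And>n a c. 0 \<le> qf K n a c"
begin

interpretation mu: prob_space \<mu> by (rule mu)

lemma Z_meas[measurable]: "Z i \<in> measurable \<Omega> S"
  using indep unfolding indep_vars_def by auto

lemma K_meas'[measurable]: "(\<lambda>(a,b). K a b) \<in> borel_measurable (\<mu> \<Otimes>\<^sub>M \<mu>)"
  using K_meas by (simp add: measurable_cong_sets[OF sets_pair_measure_cong[OF sets_mu sets_mu] refl])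

lemma K_meas2: "(\<lambda>(a,b). K a b) \<in> borel_measurable (S \<Otimes>\<^sub>M \<mu>)"
  using K_meas by (simp add: measurable_cong_sets[OF sets_pair_measure_cong[OF refl sets_mu] refl])

lemma space_mu: "space \<mu> = UNIV"
  using sets_eq_imp_space_eq[OF sets_mu] space_S by simp

lemma K_w_meas[measurable]: "K w \<in> borel_measurable \<mu>"
  using measurable_compose[OF measurable_Pair2'[of w \<mu> \<mu>] K_meas'] space_mu by simp

lemma K_w_measS[measurable]: "K w \<in> borel_measurable S"
  using K_w_meas measurable_cong_sets[OF sets_mu refl] by metis

lemma K_w_int: "integrable \<mu> (K w)"
  using K_bd by (intro mu.integrable_const_bound[where B=1]) auto

definition g :: "'s \<Rightarrow> real" where "g w = (\<integral>z. K w z \<partial>\<mu>)"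
definition c0 :: real where "c0 = (\<integral>w. g w \<partial>\<mu>)"

lemma g_meas[measurable]: "g \<in> borel_measurable S"
  unfolding g_def using K_meas2 by (intro mu.borel_measurable_lebesgue_integral) simp

lemma g_meas_mu[measurable]: "g \<in> borel_measurable \<mu>"
  using g_meas measurable_cong_sets[OF sets_mu refl] by metis

lemma g_bd: "\<bar>g w\<bar> \<le> 1"
proof -
  have "\<bar>g w\<bar> \<le> (\<integral>z. \<bar>K w z\<bar> \<partial>\<mu>)" unfolding g_def by (rule integral_abs_bound)
  also have "\<dots> \<le> (\<integral>z. 1 \<partial>\<mu>)"
    using K_bd by (intro integral_mono) (auto intro!: mu.integrable_const_bound[where B=1])
  finally show ?thesis by (simp add: mu.prob_space)
qed

lemma KZ_meas[measurable]: "(\<lambda>\<omega>. K (Z i \<omega>) (Z j \<omega>)) \<in> borel_measurable \<Omega>"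
  using measurable_compose[OF measurable_Pair[OF Z_meas[of i] Z_meas[of j]] K_meas] by simp

lemma KwZ_meas[measurable]: "(\<lambda>\<omega>. K w (Z i \<omega>)) \<in> borel_measurable \<Omega>"
  using measurable_compose[OF Z_meas[of i] K_w_measS] by simp

lemma gZ_meas[measurable]: "(\<lambda>\<omega>. g (Z i \<omega>)) \<in> borel_measurable \<Omega>"
  using measurable_compose[OF Z_meas[of i] g_meas] by simp

lemma KZ_int: "integrable \<Omega> (\<lambda>\<omega>. K (Z i \<omega>) (Z j \<omega>))"
  using K_bd by (intro integrable_const_bound[where B=1]) auto

lemma KwZ_int: "integrable \<Omega> (\<lambda>\<omega>. K w (Z i \<omega>))"
  using K_bd by (intro integrable_const_bound[where B=1]) auto

lemma gZ_int: "integrable \<Omega> (\<lambda>\<omega>. g (Z i \<omega>))"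
  using g_bd by (intro integrable_const_bound[where B=1]) auto

lemma E_single: "expectation (\<lambda>\<omega>. K w (Z i \<omega>)) = g w"
  using integral_distr[OF Z_meas[of i] K_w_measS[of w]] ident[of i] by (simp add: g_def)

lemma E_g: "expectation (\<lambda>\<omega>. g (Z i \<omega>)) = c0"
  using integral_distr[OF Z_meas[of i] g_meas] ident[of i] by (simp add: c0_def)

lemma E_pair:
  assumes ij: "i \<noteq> j"
  shows "expectation (\<lambda>\<omega>. K (Z i \<omega>) (Z j \<omega>)) = c0"
proof -
  have "indep_var (PiM {i} (\<lambda>_. S)) (\<lambda>\<omega>. restrict (\<lambda>l. Z l \<omega>) {i})
                  (PiM {j} (\<lambda>_. S)) (\<lambda>\<omega>. restrict (\<lambda>l. Z l \<omega>) {j})"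
    using ij by (intro indep_var_restrict[OF indep]) auto
  then have "indep_var S ((\<lambda>f. f i) \<circ> (\<lambda>\<omega>. restrict (\<lambda>l. Z l \<omega>) {i}))
                        S ((\<lambda>f. f j) \<circ> (\<lambda>\<omega>. restrict (\<lambda>l. Z l \<omega>) {j}))"
    by (rule indep_var_compose) (auto intro: measurable_component_singleton)
  then have ind: "indep_var S (Z i) S (Z j)" by (simp add: comp_def)
  have D: "distr \<Omega> (S \<Otimes>\<^sub>M S) (\<lambda>\<omega>. (Z i \<omega>, Z j \<omega>)) = \<mu> \<Otimes>\<^sub>M \<mu>"
    using ind unfolding indep_var_distribution_eq by (simp add: ident)
  have "expectation (\<lambda>\<omega>. K (Z i \<omega>) (Z j \<omega>)) =
      integral\<^sup>L (distr \<Omega> (S \<Otimes>\<^sub>M S) (\<lambda>\<omega>. (Z i \<omega>, Z j \<omega>))) (\<lambda>(a,b). K a b)"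
    by (subst integral_distr[OF measurable_Pair[OF Z_meas[of i] Z_meas[of j]] K_meas]) simp
  also have "\<dots> = integral\<^sup>L (\<mu> \<Otimes>\<^sub>M \<mu>) (\<lambda>(a,b). K a b)" by (simp add: D)
  also have "\<dots> = (\<integral>a. (\<integral>b. K a b \<partial>\<mu>) \<partial>\<mu>)"
  proof -
    interpret pp: pair_prob_space \<mu> \<mu> by unfold_locales
    have "integrable (\<mu> \<Otimes>\<^sub>M \<mu>) (\<lambda>(a,b). K a b)"
      using K_bd by (intro pp.P.integrable_const_bound[where B=1]) (auto simp: split_beta')
    from pp.integral_fst'[OF this] show ?thesis by simp
  qed
  finally show ?thesis by (simp add: c0_def g_def)
qed

lemma c0_bd: "\<bar>c0\<bar> \<le> 1"
proof -
  have "\<bar>c0\<bar> \<le> (\<integral>z. \<bar>g z\<bar> \<partial>\<mu>)" unfolding c0_def by (rule integral_abs_bound)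
  also have "\<dots> \<le> (\<integral>z. 1 \<partial>\<mu>)"
    using g_bd by (intro integral_mono) (auto intro!: mu.integrable_const_bound[where B=1])
  finally show ?thesis by (simp add: mu.prob_space)
qed

lemma E_pair_le: "expectation (\<lambda>\<omega>. K (Z i \<omega>) (Z j \<omega>)) \<le> c0 + (if i = j then 2 else 0)"
proof (cases "i = j")
  case True
  have "expectation (\<lambda>\<omega>. K (Z i \<omega>) (Z j \<omega>)) \<le> expectation (\<lambda>\<omega>. 1)"
    using K_bd by (intro integral_mono KZ_int) (auto simp: abs_le_iff)
  then show ?thesis using True c0_bd prob_space by (auto simp: abs_le_iff)
qed (simp add: E_pair)

lemma sum_pairs_bd:
  "(\<Sum>l<N. \<Sum>l'<N. expectation (\<lambda>\<omega>. K (Z l \<omega>) (Z l' \<omega>))) \<le> real N ^ 2 * c0 + 2 * real N"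
proof -
  have "(\<Sum>l<N. \<Sum>l'<N. expectation (\<lambda>\<omega>. K (Z l \<omega>) (Z l' \<omega>)))
      \<le> (\<Sum>l<N. \<Sum>l'<N. c0 + (if l = l' then 2 else 0))"
    by (intro sum_mono E_pair_le)
  also have "\<dots> = real N ^ 2 * c0 + 2 * real N"
    by (simp add: sum.distrib power2_eq_square algebra_simps)
  finally show ?thesis .
qed

lemma PD_int_N:
  assumes N: "N > 0"
  shows "0 \<le> qf K p a c + 2 * s * (\<Sum>i<p. c i * g (a i)) + s^2 * c0 + 2 * s^2 / real N"
proof -
  define d where "d = s / real N"
  define F where "F \<omega> = qf K (p+N) (jn p a (\<lambda>l. Z l \<omega>)) (jn p c (\<lambda>_. d))" for \<omega>
  have F_eq: "F \<omega> = qf K p a c + 2 * (\<Sum>i<p. \<Sum>l<N. c i * d * K (a i) (Z l \<omega>))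
       + (\<Sum>l<N. \<Sum>l'<N. d * d * K (Z l \<omega>) (Z l' \<omega>))" for \<omega>
    unfolding F_def qf_join[OF K_sym] by (simp add: qf_def)
  have "0 \<le> expectation F" unfolding F_def using K_pd by (intro integral_nonneg_AE) auto
  also have "expectation F = qf K p a c + 2 * (\<Sum>i<p. \<Sum>l<N. c i * d * g (a i))
       + (\<Sum>l<N. \<Sum>l'<N. d * d * expectation (\<lambda>\<omega>. K (Z l \<omega>) (Z l' \<omega>)))"
    unfolding F_eq
    by (simp add: integral_add integral_sum KZ_int KwZ_int E_single Bochner_Integration.integrable_sum prob_space)
  also have "(\<Sum>i<p. \<Sum>l<N. c i * d * g (a i)) = s * (\<Sum>i<p. c i * g (a i))"
    using N by (simp add: d_def sum_distrib_left mult_ac)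
  also have "(\<Sum>l<N. \<Sum>l'<N. d * d * expectation (\<lambda>\<omega>. K (Z l \<omega>) (Z l' \<omega>)))
      = d * d * (\<Sum>l<N. \<Sum>l'<N. expectation (\<lambda>\<omega>. K (Z l \<omega>) (Z l' \<omega>)))"
    by (simp add: sum_distrib_left)
  also have "\<dots> \<le> d * d * (real N ^ 2 * c0 + 2 * real N)"
    by (intro mult_left_mono sum_pairs_bd) auto
  also have "d * d * (real N ^ 2 * c0 + 2 * real N) = s^2 * c0 + 2 * s^2 / real N"
    using N by (simp add: d_def field_simps power2_eq_square)
  finally show ?thesis by (simp add: algebra_simps)
qed

lemma PD_int: "0 \<le> qf K p a c + 2 * s * (\<Sum>i<p. c i * g (a i)) + s^2 * c0"
proof (rule ccontr)
  define T where "T = qf K p a c + 2 * s * (\<Sum>i<p. c i * g (a i)) + s^2 * c0"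
  assume "\<not> 0 \<le> qf K p a c + 2 * s * (\<Sum>i<p. c i * g (a i)) + s^2 * c0"
  then have T: "T < 0" by (simp add: T_def)
  obtain N :: nat where N: "N > 2 * s^2 / (- T)" using reals_Archimedean2 by blast
  have "0 \<le> 2 * s^2 / (- T)" using T by (intro divide_nonneg_pos) auto
  then have "real N > 0" using N by linarith
  then have Npos: "N > 0" by simp
  have "2 * s^2 / real N < - T"
    using N T Npos by (simp add: field_simps)
  moreover have "0 \<le> T + 2 * s^2 / real N" using PD_int_N[OF Npos, of p a c s] by (simp add: T_def)
  ultimately show False by simp
qed

definition h :: "nat \<Rightarrow> 'w \<Rightarrow> 's \<Rightarrow> real" where
  "h n \<omega> w = (\<Sum>i<n. K w (Z i \<omega>)) / real n - g w"

definition V :: "nat \<Rightarrow> 'w \<Rightarrow> real" where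
  "V n \<omega> = (\<Sum>i<n. \<Sum>j<n. K (Z i \<omega>) (Z j \<omega>)) / (real n)^2
      - 2 * (\<Sum>i<n. g (Z i \<omega>)) / real n + c0"

lemma quad_form:
  assumes n: "n > 0"
  shows "0 \<le> t^2 * K w w + 2 * t * h n \<omega> w + V n \<omega>"
proof -
  define a where "a = jn 1 (\<lambda>_. w) (\<lambda>i. Z i \<omega>)"
  define c where "c = jn 1 (\<lambda>_. t) (\<lambda>_::nat. 1 / real n)"
  have 0: "0 \<le> qf K (1+n) a c + 2 * (-1) * (\<Sum>i<1+n. c i * g (a i)) + (-1)^2 * c0"
    by (rule PD_int)
  have 1: "qf K (1+n) a c = t * t * K w w + 2 * (t * (\<Sum>l<n. K w (Z l \<omega>)) / real n)
       + (\<Sum>i<n. \<Sum>j<n. K (Z i \<omega>) (Z j \<omega>)) / (real n)^2"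
    unfolding a_def c_def qf_join[OF K_sym]
    by (simp add: qf_def jn_def sum_distrib_left sum_divide_distrib power2_eq_square)
  have 2: "(\<Sum>i<1+n. c i * g (a i)) = t * g w + (\<Sum>i<n. g (Z i \<omega>)) / real n"
    unfolding sum_lessThan_add a_def c_def by (simp add: jn_def sum_divide_distrib)
  show ?thesis using 0 unfolding 1 2 h_def V_def
    by (simp add: power2_eq_square field_simps)
qed

lemma CS:
  assumes n: "n > 0"
  shows "(h n \<omega> w)^2 \<le> V n \<omega>"
proof -
  have "0 \<le> (h n \<omega> w)^2 * K w w - 2 * (h n \<omega> w)^2 + V n \<omega>"
    using quad_form[OF n, of "- h n \<omega> w" w \<omega>] by (simp add: power2_eq_square)
  moreover have "(h n \<omega> w)^2 * K w w \<le> (h n \<omega> w)^2"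
    using K_bd[of w w] by (intro mult_left_le) (auto simp: abs_le_iff)
  ultimately show ?thesis by linarith
qed

lemma c0_nonneg: "0 \<le> c0"
  using PD_int[of 0 _ _ 1] by (simp add: qf_def)

lemma V_nonneg: "0 \<le> V n \<omega>"
proof (cases "n = 0")
  case True then show ?thesis by (simp add: V_def c0_nonneg)
next
  case False
  then have "(h n \<omega> w)^2 \<le> V n \<omega>" for w by (intro CS) auto
  then show ?thesis by (meson order_trans zero_le_power2)
qed

lemma V_meas[measurable]: "V n \<in> borel_measurable \<Omega>"
  unfolding V_def by measurable

lemma V_int: "integrable \<Omega> (V n)"
  unfolding V_def
  by (simp add: KZ_int gZ_int Bochner_Integration.integrable_sum)

lemma E_V: assumes n: "n > 0" shows "expectation (V n) \<le> 2 / real n"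
proof -
  have "expectation (V n) = (\<Sum>i<n. \<Sum>j<n. expectation (\<lambda>\<omega>. K (Z i \<omega>) (Z j \<omega>))) / (real n)^2
      - 2 * (\<Sum>i<n. c0) / real n + c0"
    unfolding V_def
    by (simp add: integral_add integral_diff integral_sum KZ_int gZ_int E_g
        Bochner_Integration.integrable_sum prob_space)
  also have "\<dots> \<le> (real n ^ 2 * c0 + 2 * real n) / (real n)^2 - 2 * (\<Sum>i<n. c0) / real n + c0"
    by (intro add_mono diff_mono divide_right_mono sum_pairs_bd) auto
  also have "\<dots> = 2 / real n" using n by (simp add: field_simps power2_eq_square)
  finally show ?thesis .
qed

lemma AE_W: "AE \<omega> in \<Omega>. (\<lambda>n. V ((Suc n)^2) \<omega>) \<longlonglongrightarrow> 0"
proof -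
  have sb: "summable (\<lambda>n. 2 / real ((Suc n)^2))"
  proof -
    have "summable (\<lambda>n. inverse (real n ^ 2))"
      by (rule inverse_power_summable) simp
    then have "summable (\<lambda>n. inverse (real (Suc n) ^ 2))"
      by (subst summable_Suc_iff)
    then have "summable (\<lambda>n. 2 * inverse (real (Suc n) ^ 2))"
      by (rule summable_mult)
    moreover have "2 / real ((Suc n)^2) = 2 * inverse (real (Suc n) ^ 2)" for n
      by (simp add: divide_inverse)
    ultimately show ?thesis by simp
  qed
  have "(\<integral>\<^sup>+\<omega>. (\<Sum>n. ennreal (V ((Suc n)^2) \<omega>)) \<partial>\<Omega>) = (\<Sum>n. \<integral>\<^sup>+\<omega>. ennreal (V ((Suc n)^2) \<omega>) \<partial>\<Omega>)"
    by (rule nn_integral_suminf) (simp add: V_meas)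
  also have "\<dots> = (\<Sum>n. ennreal (expectation (V ((Suc n)^2))))"
    by (simp add: nn_integral_eq_integral V_int V_nonneg)
  also have "\<dots> \<le> (\<Sum>n. ennreal (2 / real ((Suc n)^2)))"
    by (intro suminf_le summableI ennreal_leI E_V) auto
  also have "\<dots> = ennreal (\<Sum>n. 2 / real ((Suc n)^2))"
    by (rule suminf_ennreal2[OF _ sb]) simp
  finally have "(\<integral>\<^sup>+\<omega>. (\<Sum>n. ennreal (V ((Suc n)^2) \<omega>)) \<partial>\<Omega>) \<noteq> top"
    by (rule neq_top_trans[OF ennreal_neq_top])
  then have "AE \<omega> in \<Omega>. (\<Sum>n. ennreal (V ((Suc n)^2) \<omega>)) \<noteq> \<infinity>"
    unfolding infinity_ennreal_def[symmetric] by (intro nn_integral_PInf_AE borel_measurable_suminf_order) (simp add: V_meas)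
  then show ?thesis
  proof (rule AE_mp, intro AE_I2 impI)
    fix \<omega> assume "(\<Sum>n. ennreal (V ((Suc n)^2) \<omega>)) \<noteq> \<infinity>"
    then have "summable (\<lambda>n. V ((Suc n)^2) \<omega>)"
      by (intro summable_suminf_not_top V_nonneg) simp
    then show "(\<lambda>n. V ((Suc n)^2) \<omega>) \<longlonglongrightarrow> 0" by (rule summable_LIMSEQ_zero)
  qed
qed

lemma interp:
  assumes n: "n > 0" and le: "n^2 \<le> N" and ge: "N < (Suc n)^2"
  shows "\<bar>h N \<omega> w\<bar> \<le> \<bar>h (n^2) \<omega> w\<bar> + 4 * real n / real N"
proof -
  define m where "m = n^2"
  have mpos: "m > 0" using n by (simp add: m_def)
  have Npos: "N > 0" using le mpos m_def by linarith
  define A where "A = (\<Sum>i<m. K w (Z i \<omega>))"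
  define B where "B = (\<Sum>l<N-m. K w (Z (m+l) \<omega>))"
  have split: "(\<Sum>i<N. K w (Z i \<omega>)) = A + B"
    unfolding A_def B_def using sum_lessThan_add[of "\<lambda>i. K w (Z i \<omega>)" m "N-m"] le m_def by simp
  have hm: "h m \<omega> w = A / real m - g w" by (simp add: h_def A_def)
  have hN: "h N \<omega> w = real m / real N * h m \<omega> w + (B - real (N-m) * g w) / real N"
    proof -
    have mN: "m \<le> N" using le m_def by simp
    have "h N \<omega> w = (A + B) / real N - g w" by (simp add: h_def split)
    also have "\<dots> = real m / real N * h m \<omega> w + (B - real (N-m) * g w) / real N"
      using mpos Npos mN unfolding hm by (simp add: field_simps of_nat_diff)
    finally show ?thesis .
  qed
  have "\<bar>B - real (N-m) * g w\<bar> = \<bar>\<Sum>l<N-m. (K w (Z (m+l) \<omega>) - g w)\<bar>"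
    by (simp add: B_def sum_subtractf)
  also have "\<dots> \<le> (\<Sum>l<N-m. \<bar>K w (Z (m+l) \<omega>) - g w\<bar>)" by (rule sum_abs)
  also have "\<dots> \<le> (\<Sum>l<N-m. 2)"
    proof (intro sum_mono)
    fix l
    show "\<bar>K w (Z (m+l) \<omega>) - g w\<bar> \<le> 2"
      using K_bd[of w "Z (m+l) \<omega>"] g_bd[of w] by (simp add: abs_le_iff)
  qed
  also have "\<dots> = 2 * real (N - m)" by simp
  also have "\<dots> \<le> 4 * real n"
  proof -
    have "N - m \<le> 2 * n" using ge unfolding m_def power2_eq_square by simp
    then show ?thesis by linarith
  qed
  finally have Bb: "\<bar>B - real (N-m) * g w\<bar> \<le> 4 * real n" .
  have "\<bar>h N \<omega> w\<bar> \<le> \<bar>real m / real N * h m \<omega> w\<bar> + \<bar>(B - real (N-m) * g w) / real N\<bar>"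
    unfolding hN by (rule abs_triangle_ineq)
  also have "\<bar>real m / real N * h m \<omega> w\<bar> \<le> \<bar>h m \<omega> w\<bar>"
  proof -
    have "real m / real N \<le> 1" using le Npos m_def by simp
    moreover have "0 \<le> real m / real N" by simp
    ultimately have "\<bar>real m / real N\<bar> * \<bar>h m \<omega> w\<bar> \<le> 1 * \<bar>h m \<omega> w\<bar>"
      by (intro mult_right_mono) auto
    then show ?thesis by (simp only: abs_mult)
  qed
  also have "\<bar>(B - real (N-m) * g w) / real N\<bar> \<le> 4 * real n / real N"
    using Bb Npos by (simp add: divide_right_mono)
  finally show ?thesis by (simp add: m_def)
qed

lemma unif: "AE \<omega> in \<Omega>. \<exists>B. B \<longlonglongrightarrow> 0 \<and> (\<forall>n>0. \<forall>w. \<bar>h n \<omega> w\<bar> \<le> B n)"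
  using AE_W
proof (rule AE_mp, intro AE_I2 impI)
  fix \<omega> assume W: "(\<lambda>n. V ((Suc n)^2) \<omega>) \<longlonglongrightarrow> 0"
  define s where "s N = floor_sqrt N" for N
  define B where "B N = sqrt (V ((s N)^2) \<omega>) + 4 * real (s N) / real N" for N
  have s_top: "filterlim s at_top sequentially"
    unfolding filterlim_at_top
  proof
    fix M :: nat
    show "eventually (\<lambda>N. M \<le> s N) sequentially"
      using eventually_ge_at_top[of "M^2"]
      by eventually_elim (simp add: s_def le_floor_sqrtI)
  qed
  have s1_top: "filterlim (\<lambda>N. s N - 1) at_top sequentially"
    by (rule filterlim_compose[OF filterlim_minus_const_nat_at_top s_top])
  have "(\<lambda>N. V ((Suc (s N - 1))^2) \<omega>) \<longlonglongrightarrow> 0"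
    by (rule filterlim_compose[OF W s1_top])
  moreover have "eventually (\<lambda>N. V ((Suc (s N - 1))^2) \<omega> = V ((s N)^2) \<omega>) sequentially"
    using eventually_ge_at_top[of 1]
    by eventually_elim (simp add: s_def)
  ultimately have V1: "(\<lambda>N. V ((s N)^2) \<omega>) \<longlonglongrightarrow> 0" by (rule Lim_transform_eventually)
  have T1: "(\<lambda>N. sqrt (V ((s N)^2) \<omega>)) \<longlonglongrightarrow> 0"
    using tendsto_real_sqrt[OF V1] by simp
  have inv: "(\<lambda>N. 4 / real (s N)) \<longlonglongrightarrow> 0"
    by (intro tendsto_divide_0[OF tendsto_const] filterlim_at_top_imp_at_infinity
        filterlim_compose[OF filterlim_real_sequentially s_top])
  have T2: "(\<lambda>N. 4 * real (s N) / real N) \<longlonglongrightarrow> 0"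
  proof (rule tendsto_sandwich[OF _ _ tendsto_const inv])
    show "eventually (\<lambda>N. 0 \<le> 4 * real (s N) / real N) sequentially" by simp
    show "eventually (\<lambda>N. 4 * real (s N) / real N \<le> 4 / real (s N)) sequentially"
      using eventually_ge_at_top[of 1]
    proof eventually_elim
      case (elim N)
      have sp: "s N > 0" using elim by (simp add: s_def)
      have "real (s N) * real (s N) \<le> real N"
        using floor_sqrt_power2_le[of N] unfolding s_def power2_eq_square of_nat_mult[symmetric] of_nat_le_iff .
      then show ?case using sp elim by (simp add: field_simps)
    qed
  qed
  have "B \<longlonglongrightarrow> 0" unfolding B_def using tendsto_add[OF T1 T2] by simp
  moreover have "\<forall>n>0. \<forall>w. \<bar>h n \<omega> w\<bar> \<le> B n"
  proof (intro allI impI)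
    fix N w :: _ assume N: "(N::nat) > 0"
    have sp: "s N > 0" using N by (simp add: s_def)
    have "\<bar>h N \<omega> w\<bar> \<le> \<bar>h ((s N)^2) \<omega> w\<bar> + 4 * real (s N) / real N"
      using sp by (intro interp) (auto simp: s_def Suc_floor_sqrt_power2_gt)
    also have "\<bar>h ((s N)^2) \<omega> w\<bar> \<le> sqrt (V ((s N)^2) \<omega>)"
      using CS[of "(s N)^2" \<omega> w] sp real_sqrt_le_mono by fastforce
    finally show "\<bar>h N \<omega> w\<bar> \<le> B N" by (simp add: B_def)
  qed
  ultimately show "\<exists>B. B \<longlonglongrightarrow> 0 \<and> (\<forall>n>0. \<forall>w. \<bar>h n \<omega> w\<bar> \<le> B n)" by blast
qed

end

definition K1 :: "(real list \<Rightarrow> real list \<Rightarrow> real) \<Rightarrow> ('d::{finite,linorder} \<Rightarrow> bool)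
   \<Rightarrow> (real ^ 'd::{finite,linorder}) \<times> ('d::{finite,linorder} \<Rightarrow> bool) \<Rightarrow> (real ^ 'd::{finite,linorder}) \<times> ('d::{finite,linorder} \<Rightarrow> bool) \<Rightarrow> real" where
  "K1 k m a b = (if snd a = m \<and> snd b = m then k (obs_sub m (fst a)) (obs_sub m (fst b)) else 0)"

definition K2 :: "('d::{finite,linorder} \<Rightarrow> bool)
   \<Rightarrow> (real ^ 'd::{finite,linorder}) \<times> ('d::{finite,linorder} \<Rightarrow> bool) \<Rightarrow> (real ^ 'd::{finite,linorder}) \<times> ('d::{finite,linorder} \<Rightarrow> bool) \<Rightarrow> real" where
  "K2 m a b = (if snd a = m \<and> snd b = m then 1 else 0)"

lemma length_obs_sub: "length (obs_sub m x) = card {j. \<not> m j}"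
  by (simp add: obs_sub_def)

lemma K1_pd:
  assumes "pd_kernel k"
  shows "0 \<le> qf (K1 k m) n a c"
proof -
  define c' where "c' i = (if snd (a i) = m then c i else 0)" for i
  define xs where "xs i = obs_sub m (fst (a i))" for i
  have "qf (K1 k m) n a c = (\<Sum>i<n. \<Sum>j<n. c' i * c' j * k (xs i) (xs j))"
    unfolding qf_def K1_def c'_def xs_def by (intro sum.cong refl) auto
  also have "0 \<le> \<dots>"
  proof -
    have H: "\<forall>(l::nat) (n::nat) (xs::nat \<Rightarrow> real list) (c::nat \<Rightarrow> real).
        (\<forall>i<n. length (xs i) = l) \<longrightarrow> 0 \<le> (\<Sum>i<n. \<Sum>j<n. c i * c j * k (xs i) (xs j))"
      using assms unfolding pd_kernel_def by blast
    show ?thesis by (rule H[rule_format]) (simp add: xs_def length_obs_sub)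
  qed
  finally show ?thesis .
qed

lemma K2_pd: "0 \<le> qf (K2 m) n a c"
proof -
  define c' where "c' i = (if snd (a i) = m then c i else 0)" for i
  have "qf (K2 m) n a c = (\<Sum>i<n. \<Sum>j<n. c' i * c' j)"
    unfolding qf_def K2_def c'_def by (intro sum.cong refl) auto
  also have "\<dots> = (\<Sum>i<n. c' i)^2"
    by (simp add: power2_eq_square sum_product)
  finally show ?thesis by simp
qed

lemma K1_meas:
  fixes m :: "'d::{finite,linorder} \<Rightarrow> bool"
  assumes km: "(\<lambda>(x, y). k (obs_sub m x) (obs_sub m y)) \<in> borel_measurable (borel \<Otimes>\<^sub>M borel)"
  shows "(\<lambda>(a,b). K1 k m a b) \<in> borel_measurable
     ((borel \<Otimes>\<^sub>M count_space UNIV) \<Otimes>\<^sub>M (borel \<Otimes>\<^sub>M count_space UNIV))"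
proof -
  have "(\<lambda>p. (\<lambda>(x, y). k (obs_sub m x) (obs_sub m y)) (fst (fst p), fst (snd p)))
     \<in> borel_measurable ((borel \<Otimes>\<^sub>M count_space UNIV) \<Otimes>\<^sub>M (borel \<Otimes>\<^sub>M (count_space UNIV :: ('d \<Rightarrow> bool) measure)))"
    by (rule measurable_compose[OF _ km]) measurable
  then have [measurable]: "(\<lambda>p. k (obs_sub m (fst (fst p))) (obs_sub m (fst (snd p))))
     \<in> borel_measurable ((borel \<Otimes>\<^sub>M count_space UNIV) \<Otimes>\<^sub>M (borel \<Otimes>\<^sub>M (count_space UNIV :: ('d \<Rightarrow> bool) measure)))"
    by simp
  show ?thesis
    unfolding K1_def split_beta' by measurable
qed

lemma K2_meas:
  "(\<lambda>(a,b). K2 m a b) \<in> borel_measurable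
     ((borel \<Otimes>\<^sub>M count_space UNIV) \<Otimes>\<^sub>M (borel \<Otimes>\<^sub>M (count_space UNIV :: ('d::{finite,linorder} \<Rightarrow> bool) measure)))"
  unfolding K2_def split_beta' by measurable

lemma int_bd1:
  fixes f :: "'a \<Rightarrow> real"
  assumes "prob_space M" "\<And>x. \<bar>f x\<bar> \<le> 1"
  shows "\<bar>\<integral>x. f x \<partial>M\<bar> \<le> 1"
proof (cases "integrable M f")
  case True
  interpret prob_space M by fact
  have "\<bar>\<integral>x. f x \<partial>M\<bar> \<le> (\<integral>x. \<bar>f x\<bar> \<partial>M)" by (rule integral_abs_bound)
  also have "\<dots> \<le> (\<integral>x. 1 \<partial>M)" using True assms(2) by (intro integral_mono) auto
  finally show ?thesis by (simp add: prob_space)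
qed (simp add: not_integrable_integral_eq)

lemma key_identity:
  fixes k :: "real list \<Rightarrow> real list \<Rightarrow> real"
    and Q :: "(real ^ 'd::{finite,linorder}) measure"
    and PXM :: "((real ^ 'd::{finite,linorder}) \<times> ('d::{finite,linorder} \<Rightarrow> bool)) measure"
    and z :: "nat \<Rightarrow> (real ^ 'd::{finite,linorder}) \<times> ('d::{finite,linorder} \<Rightarrow> bool)"
  assumes ksym: "\<And>u v. k u v = k v u"
    and k_bounded: "\<And>u v. \<bar>k u v\<bar> \<le> 1"
    and k_meas: "\<And>m :: 'd::{finite,linorder} \<Rightarrow> bool. (\<lambda>(x, y). k (obs_sub m x) (obs_sub m y))
                        \<in> borel_measurable (borel \<Otimes>\<^sub>M borel)"
    and Q: "prob_space Q" "sets Q = sets borel"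
    and PXM: "prob_space PXM" "sets PXM = sets (borel \<Otimes>\<^sub>M count_space UNIV)"
  shows "(1 / real n) * (\<Sum>i<n. mmd_loss k Q (fst (z i)) (snd (z i)))
           - (\<integral>w. mmd_loss k Q (fst w) (snd w) \<partial>PXM)
     = (\<Sum>m\<in>UNIV - {\<lambda>_. True}. emb_inner_self k Q m *
          ((\<Sum>i<n. K2 m (undefined, m) (z i)) / real n - (\<integral>w. K2 m (undefined, m) w \<partial>PXM))
        - 2 * (\<integral>y. ((\<Sum>i<n. K1 k m (y, m) (z i)) / real n - (\<integral>w. K1 k m (y, m) w \<partial>PXM)) \<partial>Q))"
proof -
  interpret Q: prob_space Q by fact
  interpret P: prob_space PXM by fact
  interpret QP: pair_prob_space Q PXM by unfold_locales
  define U where "U = (UNIV :: ('d::{finite,linorder} \<Rightarrow> bool) set) - {\<lambda>_. True}"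
  have finU: "finite U" unfolding U_def by simp
  define A where "A m = emb_inner_self k Q m" for m
  define G where "G m x = emb_inner_pt k Q m x" for m x
  define I where "I m w = (if snd w = m then 1 else (0::real))" for m and w :: "(real ^ 'd::{finite,linorder}) \<times> ('d::{finite,linorder} \<Rightarrow> bool)"
  define J where "J m w = (if snd w = m then G m (fst w) else 0)" for m and w :: "(real ^ 'd::{finite,linorder}) \<times> ('d::{finite,linorder} \<Rightarrow> bool)"
  define f where "f m w = A m * I m w - 2 * J m w" for m w
  have measPXM: "\<And>N. measurable PXM N = measurable (borel \<Otimes>\<^sub>M count_space UNIV) N"
    by (rule measurable_cong_sets[OF PXM(2) refl])
  have km2: "(\<lambda>(x, y). k (obs_sub m y) (obs_sub m x)) \<in> borel_measurable (borel \<Otimes>\<^sub>M Q)" for m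
  proof -
    have "(\<lambda>(x, y). k (obs_sub m y) (obs_sub m x)) = (\<lambda>(x, y). k (obs_sub m x) (obs_sub m y))"
      by (auto simp: ksym)
    then show ?thesis using k_meas[of m]
      by (simp add: measurable_cong_sets[OF sets_pair_measure_cong[OF refl Q(2)] refl])
  qed
  have G_meas[measurable]: "G m \<in> borel_measurable borel" for m
    unfolding G_def emb_inner_pt_def
    using Q.borel_measurable_lebesgue_integral[of "\<lambda>x y. k (obs_sub m y) (obs_sub m x)" borel] km2[of m]
    by simp
  have G_bd: "\<bar>G m x\<bar> \<le> 1" for m x
    unfolding G_def emb_inner_pt_def by (rule int_bd1[OF Q(1) k_bounded])
  have A_bd: "\<bar>A m\<bar> \<le> 1" for m
    unfolding A_def emb_inner_self_def
    by (rule int_bd1[OF Q(1)]) (rule int_bd1[OF Q(1) k_bounded])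
  have I_meas: "I m \<in> borel_measurable PXM" for m
    unfolding measPXM I_def by measurable
  have J_meas: "J m \<in> borel_measurable PXM" for m
    unfolding measPXM J_def by measurable
  have I_int: "integrable PXM (I m)" for m
    by (rule P.integrable_const_bound[where B=1]) (auto simp: I_def I_meas)
  have J_int: "integrable PXM (J m)" for m
    by (rule P.integrable_const_bound[where B=1]) (auto simp: J_def J_meas G_bd)
  have f_int: "integrable PXM (f m)" for m
    unfolding f_def using I_int J_int by simp
  have loss_eq: "mmd_loss k Q x m' = (\<Sum>m\<in>U. f m (x, m'))" for x m'
  proof -
    have "(\<Sum>m\<in>U. f m (x, m')) = (\<Sum>m\<in>U. if m' = m then A m - 2 * G m x else 0)"
      by (intro sum.cong refl) (simp add: f_def I_def J_def)
    also have "\<dots> = (if m' \<in> U then A m' - 2 * G m' x else 0)"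
      using finU by (simp add: sum.delta)
    finally show ?thesis by (simp add: mmd_loss_def U_def A_def G_def)
  qed
  have LHS: "(1 / real n) * (\<Sum>i<n. mmd_loss k Q (fst (z i)) (snd (z i)))
           - (\<integral>w. mmd_loss k Q (fst w) (snd w) \<partial>PXM)
      = (\<Sum>m\<in>U. (\<Sum>i<n. f m (z i)) / real n - (\<integral>w. f m w \<partial>PXM))"
  proof -
    have "(\<Sum>i<n. mmd_loss k Q (fst (z i)) (snd (z i))) = (\<Sum>m\<in>U. \<Sum>i<n. f m (z i))"
      unfolding loss_eq by (subst sum.swap) simp
    moreover have "(\<integral>w. mmd_loss k Q (fst w) (snd w) \<partial>PXM) = (\<Sum>m\<in>U. \<integral>w. f m w \<partial>PXM)"
      unfolding loss_eq by (simp add: integral_sum f_int)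
    ultimately show ?thesis
      by (simp add: sum_subtractf sum_divide_distrib)
  qed
  have per_m: "(\<Sum>i<n. f m (z i)) / real n - (\<integral>w. f m w \<partial>PXM)
      = A m * ((\<Sum>i<n. K2 m (undefined, m) (z i)) / real n - (\<integral>w. K2 m (undefined, m) w \<partial>PXM))
        - 2 * (\<integral>y. ((\<Sum>i<n. K1 k m (y, m) (z i)) / real n - (\<integral>w. K1 k m (y, m) w \<partial>PXM)) \<partial>Q)"
    for m
  proof -
    have K2I: "K2 m (undefined, m) w = I m w" for w by (simp add: K2_def I_def)
    have K1y: "K1 k m (y, m) w = (if snd w = m then k (obs_sub m y) (obs_sub m (fst w)) else 0)" for y w
      by (simp add: K1_def)
    have K1_meas_y: "(\<lambda>y. K1 k m (y, m) w) \<in> borel_measurable Q" for w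
    proof -
      have "(\<lambda>y. k (obs_sub m y) (obs_sub m (fst w))) \<in> borel_measurable borel"
        using measurable_compose[OF measurable_Pair1'[of "fst w" borel borel] k_meas[of m]] by (simp add: ksym[of "obs_sub m (fst w)"])
      then have "(\<lambda>y. k (obs_sub m y) (obs_sub m (fst w))) \<in> borel_measurable Q"
        by (simp add: measurable_cong_sets[OF Q(2) refl])
      then show ?thesis unfolding K1y by (cases "snd w = m") simp_all
    qed
    have K1_int_y: "integrable Q (\<lambda>y. K1 k m (y, m) w)" for w
      by (rule Q.integrable_const_bound[where B=1], simp add: K1y k_bounded, rule K1_meas_y)
    have intJ: "(\<integral>y. K1 k m (y, m) w \<partial>Q) = J m w" for w
      by (simp add: K1y J_def G_def emb_inner_pt_def)
    have prod_meas: "(\<lambda>p. K1 k m (fst p, m) (snd p)) \<in> borel_measurable (Q \<Otimes>\<^sub>M PXM)"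
    proof -
      have "(\<lambda>p. ((fst p, m), snd p)) \<in> measurable (borel \<Otimes>\<^sub>M (borel \<Otimes>\<^sub>M count_space UNIV))
          ((borel \<Otimes>\<^sub>M count_space UNIV) \<Otimes>\<^sub>M (borel \<Otimes>\<^sub>M count_space UNIV))"
        by measurable
      from measurable_compose[OF this K1_meas[OF k_meas[of m]]]
      show ?thesis
        by (simp add: measurable_cong_sets[OF sets_pair_measure_cong[OF Q(2) PXM(2)] refl])
    qed
    have prod_int: "integrable (Q \<Otimes>\<^sub>M PXM) (\<lambda>(y, w). K1 k m (y, m) w)"
      by (rule QP.P.integrable_const_bound[where B=1], simp add: K1_def k_bounded split_beta',
          simp only: split_beta' prod_meas)
    have fub: "(\<integral>y. (\<integral>w. K1 k m (y, m) w \<partial>PXM) \<partial>Q) = (\<integral>w. J m w \<partial>PXM)"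
      using QP.Fubini_integral[of "\<lambda>y w. K1 k m (y, m) w", OF prod_int] by (simp add: intJ)
    have int2: "integrable Q (\<lambda>y. \<integral>w. K1 k m (y, m) w \<partial>PXM)"
    proof (rule Q.integrable_const_bound[where B=1])
      show "AE x in Q. norm (\<integral>w. K1 k m (x, m) w \<partial>PXM) \<le> 1"
        by (intro AE_I2) (simp add: int_bd1[OF PXM(1)] K1_def k_bounded)
      show "(\<lambda>y. \<integral>w. K1 k m (y, m) w \<partial>PXM) \<in> borel_measurable Q"
        using P.borel_measurable_lebesgue_integral[of "\<lambda>y w. K1 k m (y, m) w" Q] prod_meas
        by (simp add: split_beta')
    qed
    have "(\<integral>y. ((\<Sum>i<n. K1 k m (y, m) (z i)) / real n - (\<integral>w. K1 k m (y, m) w \<partial>PXM)) \<partial>Q)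
        = (\<Sum>i<n. J m (z i)) / real n - (\<integral>w. J m w \<partial>PXM)"
      by (simp add: integral_diff int2 K1_int_y Bochner_Integration.integrable_sum
          integral_sum intJ fub)
    moreover have "(\<integral>w. f m w \<partial>PXM) = A m * (\<integral>w. I m w \<partial>PXM) - 2 * (\<integral>w. J m w \<partial>PXM)"
      unfolding f_def by (simp add: I_int J_int)
    moreover have "(\<Sum>i<n. f m (z i)) / real n = A m * (\<Sum>i<n. I m (z i)) / real n - 2 * (\<Sum>i<n. J m (z i)) / real n"
      unfolding f_def by (simp add: sum_subtractf sum_distrib_left diff_divide_distrib)
    ultimately show ?thesis unfolding K2I by (simp add: algebra_simps)
  qed
  show ?thesis unfolding LHS per_m U_def A_def ..
qed

lemma int_bdB:
  fixes f :: "'a \<Rightarrow> real"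
  assumes "prob_space M" "\<And>x. \<bar>f x\<bar> \<le> B"
  shows "\<bar>\<integral>x. f x \<partial>M\<bar> \<le> B"
proof (cases "integrable M f")
  case True
  interpret prob_space M by fact
  have "\<bar>\<integral>x. f x \<partial>M\<bar> \<le> (\<integral>x. \<bar>f x\<bar> \<partial>M)" by (rule integral_abs_bound)
  also have "\<dots> \<le> (\<integral>x. B \<partial>M)" using True assms(2) by (intro integral_mono) auto
  finally show ?thesis by (simp add: prob_space)
next
  case False
  have "0 \<le> B" using assms(2)[of undefined] by linarith
  then show ?thesis using False by (simp add: not_integrable_integral_eq)
qed

theorem lemma1:
  fixes k :: "real list \<Rightarrow> real list \<Rightarrow> real"
    and P :: "'t \<Rightarrow> (real ^ 'd::{finite,linorder}) measure"
    and PXM :: "((real ^ 'd::{finite,linorder}) \<times> ('d::{finite,linorder} \<Rightarrow> bool)) measure"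
    and \<Omega> :: "'w measure"
    and Z :: "nat \<Rightarrow> 'w \<Rightarrow> (real ^ 'd::{finite,linorder}) \<times> ('d::{finite,linorder} \<Rightarrow> bool)"
  assumes k_pd: "pd_kernel k"
    and k_bounded: "\<And>u v. \<bar>k u v\<bar> \<le> 1"
    and k_meas: "\<And>m :: 'd::{finite,linorder} \<Rightarrow> bool. (\<lambda>(x, y). k (obs_sub m x) (obs_sub m y))
                        \<in> borel_measurable (borel \<Otimes>\<^sub>M borel)"
    and model: "\<And>\<theta>. prob_space (P \<theta>) \<and> sets (P \<theta>) = sets borel"
    and PXM: "prob_space PXM" "sets PXM = sets (borel \<Otimes>\<^sub>M count_space UNIV)"
    and \<Omega>: "prob_space \<Omega>"
    and indep: "prob_space.indep_vars \<Omega> (\<lambda>_. borel \<Otimes>\<^sub>M count_space UNIV) Z UNIV"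
    and ident: "\<And>i. distr \<Omega> (borel \<Otimes>\<^sub>M count_space UNIV) (Z i) = PXM"
  shows "AE \<omega> in \<Omega>.
     (\<lambda>n. SUP \<theta>. \<bar>(1 / real n) * (\<Sum>i<n. mmd_loss k (P \<theta>) (fst (Z i \<omega>)) (snd (Z i \<omega>)))
                 - (\<integral>z. mmd_loss k (P \<theta>) (fst z) (snd z) \<partial>PXM)\<bar>) \<longlonglongrightarrow> 0"
proof -
  define S where "S = (borel \<Otimes>\<^sub>M count_space UNIV :: ((real ^ 'd::{finite,linorder}) \<times> ('d::{finite,linorder} \<Rightarrow> bool)) measure)"
  have ksym: "\<And>u v. k u v = k v u" using k_pd by (simp add: pd_kernel_def)
  have spS: "space S = UNIV" by (simp add: S_def space_pair_measure)
  have inst1: "ksetup \<Omega> Z S PXM (K1 k m)" for m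
  proof (intro ksetup.intro ksetup_axioms.intro)
    show "prob_space \<Omega>" by (rule \<Omega>)
    show "prob_space PXM" by (rule PXM(1))
    show "sets PXM = sets S" by (simp add: S_def PXM(2))
    show "space S = UNIV" by (rule spS)
    show "prob_space.indep_vars \<Omega> (\<lambda>_. S) Z UNIV" using indep by (simp add: S_def)
    show "distr \<Omega> S (Z i) = PXM" for i using ident by (simp add: S_def)
    show "(\<lambda>(a, b). K1 k m a b) \<in> borel_measurable (S \<Otimes>\<^sub>M S)"
      unfolding S_def by (rule K1_meas[OF k_meas])
    show "\<bar>K1 k m a b\<bar> \<le> 1" for a b by (simp add: K1_def k_bounded)
    show "K1 k m a b = K1 k m b a" for a b by (auto simp: K1_def ksym)
    show "0 \<le> qf (K1 k m) n a c" for n a c by (rule K1_pd[OF k_pd])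
  qed
  have inst2: "ksetup \<Omega> Z S PXM (K2 m)" for m
  proof (intro ksetup.intro ksetup_axioms.intro)
    show "prob_space \<Omega>" by (rule \<Omega>)
    show "prob_space PXM" by (rule PXM(1))
    show "sets PXM = sets S" by (simp add: S_def PXM(2))
    show "space S = UNIV" by (rule spS)
    show "prob_space.indep_vars \<Omega> (\<lambda>_. S) Z UNIV" using indep by (simp add: S_def)
    show "distr \<Omega> S (Z i) = PXM" for i using ident by (simp add: S_def)
    show "(\<lambda>(a, b). K2 m a b) \<in> borel_measurable (S \<Otimes>\<^sub>M S)"
      unfolding S_def by (rule K2_meas)
    show "\<bar>K2 m a b\<bar> \<le> 1" for a b by (simp add: K2_def)
    show "K2 m a b = K2 m b a" for a b by (auto simp: K2_def)
    show "0 \<le> qf (K2 m) n a c" for n a c by (rule K2_pd)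
  qed
  define U where "U = (UNIV :: ('d::{finite,linorder} \<Rightarrow> bool) set) - {\<lambda>_. True}"
  have finU: "finite U" unfolding U_def by simp
  have AE1: "AE \<omega> in \<Omega>. \<forall>m\<in>U. \<exists>B. B \<longlonglongrightarrow> 0 \<and>
      (\<forall>n>0. \<forall>w. \<bar>ksetup.h Z PXM (K1 k m) n \<omega> w\<bar> \<le> B n)"
    by (intro AE_finite_allI[OF finU] ksetup.unif[OF inst1])
  have AE2: "AE \<omega> in \<Omega>. \<forall>m\<in>U. \<exists>B. B \<longlonglongrightarrow> 0 \<and>
      (\<forall>n>0. \<forall>w. \<bar>ksetup.h Z PXM (K2 m) n \<omega> w\<bar> \<le> B n)"
    by (intro AE_finite_allI[OF finU] ksetup.unif[OF inst2])
  show ?thesis using AE1 AE2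
  proof eventually_elim
    case (elim \<omega>)
    obtain B1 where B1: "\<forall>m\<in>U. B1 m \<longlonglongrightarrow> 0 \<and>
      (\<forall>n>0. \<forall>w. \<bar>ksetup.h Z PXM (K1 k m) n \<omega> w\<bar> \<le> B1 m n)"
      using bchoice[OF elim(1)] by blast
    obtain B2 where B2: "\<forall>m\<in>U. B2 m \<longlonglongrightarrow> 0 \<and>
      (\<forall>n>0. \<forall>w. \<bar>ksetup.h Z PXM (K2 m) n \<omega> w\<bar> \<le> B2 m n)"
      using bchoice[OF elim(2)] by blast
    define T where "T n = (\<Sum>m\<in>U. B2 m n + 2 * B1 m n)" for n
    have T0: "T \<longlonglongrightarrow> 0"
    proof -
      have "T \<longlonglongrightarrow> (\<Sum>m\<in>U. 0 + 2 * 0)"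
        unfolding T_def using B1 B2 by (intro tendsto_sum tendsto_add tendsto_mult tendsto_const) auto
      then show ?thesis by simp
    qed
    define D where "D \<theta> n = \<bar>(1 / real n) * (\<Sum>i<n. mmd_loss k (P \<theta>) (fst (Z i \<omega>)) (snd (Z i \<omega>)))
                 - (\<integral>z. mmd_loss k (P \<theta>) (fst z) (snd z) \<partial>PXM)\<bar>" for \<theta> n
    have Dbd: "D \<theta> n \<le> T n" if n: "n > 0" for \<theta> n
    proof -
      have Q: "prob_space (P \<theta>)" "sets (P \<theta>) = sets borel" using model by auto
      have "D \<theta> n = \<bar>\<Sum>m\<in>U. emb_inner_self k (P \<theta>) m *
          ((\<Sum>i<n. K2 m (undefined, m) (Z i \<omega>)) / real n - (\<integral>w. K2 m (undefined, m) w \<partial>PXM))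
        - 2 * (\<integral>y. ((\<Sum>i<n. K1 k m (y, m) (Z i \<omega>)) / real n - (\<integral>w. K1 k m (y, m) w \<partial>PXM)) \<partial>P \<theta>)\<bar>"
        unfolding D_def U_def
        by (subst key_identity[OF ksym k_bounded k_meas Q PXM]) (rule refl)
      also have "\<dots> \<le> (\<Sum>m\<in>U. \<bar>emb_inner_self k (P \<theta>) m *
          ((\<Sum>i<n. K2 m (undefined, m) (Z i \<omega>)) / real n - (\<integral>w. K2 m (undefined, m) w \<partial>PXM))
        - 2 * (\<integral>y. ((\<Sum>i<n. K1 k m (y, m) (Z i \<omega>)) / real n - (\<integral>w. K1 k m (y, m) w \<partial>PXM)) \<partial>P \<theta>)\<bar>)"
        by (rule sum_abs)
      also have "\<dots> \<le> T n"
        unfolding T_def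
      proof (rule sum_mono)
        fix m assume m: "m \<in> U"
        have h2: "\<bar>(\<Sum>i<n. K2 m (undefined, m) (Z i \<omega>)) / real n - (\<integral>w. K2 m (undefined, m) w \<partial>PXM)\<bar> \<le> B2 m n"
          using B2 m n unfolding ksetup.h_def[OF inst2] ksetup.g_def[OF inst2] by blast
        have h1: "\<bar>(\<Sum>i<n. K1 k m (y, m) (Z i \<omega>)) / real n - (\<integral>w. K1 k m (y, m) w \<partial>PXM)\<bar> \<le> B1 m n" for y
          using B1 m n unfolding ksetup.h_def[OF inst1] ksetup.g_def[OF inst1] by blast
        have i1: "\<bar>\<integral>y. ((\<Sum>i<n. K1 k m (y, m) (Z i \<omega>)) / real n - (\<integral>w. K1 k m (y, m) w \<partial>PXM)) \<partial>P \<theta>\<bar> \<le> B1 m n"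
          by (rule int_bdB[OF Q(1) h1])
        have A: "\<bar>emb_inner_self k (P \<theta>) m\<bar> \<le> 1"
          unfolding emb_inner_self_def
          by (rule int_bd1[OF Q(1)]) (rule int_bd1[OF Q(1) k_bounded])
        have "\<bar>emb_inner_self k (P \<theta>) m *
          ((\<Sum>i<n. K2 m (undefined, m) (Z i \<omega>)) / real n - (\<integral>w. K2 m (undefined, m) w \<partial>PXM))\<bar> \<le> 1 * B2 m n"
          unfolding abs_mult by (intro mult_mono A h2) auto
        then show "\<bar>emb_inner_self k (P \<theta>) m *
          ((\<Sum>i<n. K2 m (undefined, m) (Z i \<omega>)) / real n - (\<integral>w. K2 m (undefined, m) w \<partial>PXM))
        - 2 * (\<integral>y. ((\<Sum>i<n. K1 k m (y, m) (Z i \<omega>)) / real n - (\<integral>w. K1 k m (y, m) w \<partial>PXM)) \<partial>P \<theta>)\<bar>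
          \<le> B2 m n + 2 * B1 m n"
          using i1 by (simp add: abs_le_iff)
      qed
      finally show ?thesis .
    qed
    show "(\<lambda>n. SUP \<theta>. D \<theta> n) \<longlonglongrightarrow> 0"
    proof (rule tendsto_sandwich[OF _ _ tendsto_const T0])
      show "eventually (\<lambda>n. 0 \<le> (SUP \<theta>. D \<theta> n)) sequentially"
        using eventually_gt_at_top[of 0]
      proof eventually_elim
        case (elim n)
        have "bdd_above (range (\<lambda>\<theta>. D \<theta> n))" using Dbd elim by (auto intro!: bdd_aboveI)
        then have "D undefined n \<le> (SUP \<theta>. D \<theta> n)" by (rule cSUP_upper[OF UNIV_I])
        moreover have "0 \<le> D undefined n" by (simp add: D_def)
        ultimately show ?case by linarith
      qed
      show "eventually (\<lambda>n. (SUP \<theta>. D \<theta> n) \<le> T n) sequentially"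
        using eventually_gt_at_top[of 0]
        by eventually_elim (auto intro!: cSUP_least Dbd)
    qed
  qed
qed

end
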